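(* Let $\mathcal{U}$ be a finite set of candidate utility functions whose cardinality is $O(1)$, i.e., independent of the dataset size $N=|\mathcal{D}|$, and satisfying the bounded-range assumption. Then $\mathcal{U}$ is $(\epsilon,\delta)$-gameable under the aggregate-value favorability $F_{\mathrm{agg}}(\psi(U);P)$, for any $P\subseteq\mathcal{D}$. A witnessing algorithm is: for each $U\in\mathcal{U}$, estimate all semivalues $\psi_i(U,w)$ by stratified sampling (drawing, for each $i$ and each $k$, independent uniform coalitions of size $k$ not containing $i$ and averaging marginal contributions, weighted by $w_k\binom{N-1}{k}$), compute the estimated $F_{\mathrm{agg}}$ for $P$, and return the $U\in\mathcal{U}$ with the largest estimated favorability.
   Context: Let $\mathcal{D}$ be a dataset of $N$ datapoints. A utility function is a map $U:2^{\mathcal{D}}\to\mathbb{R}$. Fix non-negative weights $w_0,\dots,w_{N-1}$ with $\sum_{S\subseteq\mathcal{D}\setminus\{i\}}w_{|S|}=1$; the semivalue of $i\in\mathcal{D}$ is $\psi_i(U)=\sum_{S\subseteq\mathcal{D}\setminus\{i\}} w_{|S|}[U(S\cup\{i\})-U(S)]$. The aggregate-value favorability of $U$ for $P\subseteq\mathcal{D}$ is $F_{\mathrm{agg}}(\psi(U);P)=\sum_{i\in P}\psi_i(U)$. Bounded-range assumption (standing): there is a finite $r$ such that $\max_{S\subseteq\mathcal{D}}U(S)-\min_{S\subseteq\mathcal{D}}U(S)\le r$ for all $U\in\mathcal{U}$. A candidate class $\mathcal{U}$ is $(\epsilon,\delta)$-gameable under favorability $F$ and semivalue $\psi$ if there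 exists an algorithm that, for any $P\subseteq\mathcal{D}$, returns $U\in\mathcal{U}$ such that with probability at least $1-\delta$, $|F(\psi(U),P)-\max_{U'\in\mathcal{U}}F(\psi(U'),P)|<\epsilon$, using at most $O(\mathrm{poly}(N)\log(1/\delta)/\epsilon^2)$ utility function evaluations. *)

theory Defs
  imports "HOL-Probability.Probability"
begin

definition semivalue :: "'a set \<Rightarrow> (nat \<Rightarrow> real) \<Rightarrow> ('a set \<Rightarrow> real) \<Rightarrow> 'a \<Rightarrow> real" where
  "semivalue D w U i = (\<Sum>S\<in>Pow (D - {i}). w (card S) * (U (S \<union> {i}) - U S))"

definition F_agg :: "'a set \<Rightarrow> (nat \<Rightarrow> real) \<Rightarrow> ('a set \<Rightarrow> real) \<Rightarrow> 'a set \<Rightarrow> real" where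
  "F_agg D w U P = (\<Sum>i\<in>P. semivalue D w U i)"

definition valid_weights :: "'a set \<Rightarrow> (nat \<Rightarrow> real) \<Rightarrow> bool" where
  "valid_weights D w \<longleftrightarrow> (\<forall>k. 0 \<le> w k) \<and>
     (\<forall>i\<in>D. (\<Sum>S\<in>Pow (D - {i}). w (card S)) = 1)"

definition bounded_range :: "'a set \<Rightarrow> real \<Rightarrow> ('a set \<Rightarrow> real) set \<Rightarrow> bool" where
  "bounded_range D r UU \<longleftrightarrow>
     (\<forall>U\<in>UU. \<forall>S T. S \<subseteq> D \<longrightarrow> T \<subseteq> D \<longrightarrow> U S - U T \<le> r)"

(* Index set of all samples: (U, i, k, j) = j-th sampled coalition of size k avoiding i,
   used for estimating the semivalue of i under U. *)
definition sample_index :: "'a set \<Rightarrow> ('a set \<Rightarrow> real) set \<Rightarrow> nat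
     \<Rightarrow> (('a set \<Rightarrow> real) \<times> 'a \<times> nat \<times> nat) set" where
  "sample_index D UU m = UU \<times> D \<times> {..<card D} \<times> {..<m}"

definition strat_sample_pmf :: "'a set \<Rightarrow> ('a set \<Rightarrow> real) set \<Rightarrow> nat
     \<Rightarrow> (('a set \<Rightarrow> real) \<times> 'a \<times> nat \<times> nat \<Rightarrow> 'a set) pmf" where
  "strat_sample_pmf D UU m =
     Pi_pmf (sample_index D UU m) {}
       (\<lambda>(U, i, k, j). pmf_of_set {S. S \<subseteq> D - {i} \<and> card S = k})"

definition est_semivalue :: "'a set \<Rightarrow> (nat \<Rightarrow> real) \<Rightarrow> nat
     \<Rightarrow> (('a set \<Rightarrow> real) \<times> 'a \<times> nat \<times> nat \<Rightarrow> 'a set)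
     \<Rightarrow> ('a set \<Rightarrow> real) \<Rightarrow> 'a \<Rightarrow> real" where
  "est_semivalue D w m \<sigma> U i =
     (\<Sum>k<card D. w k * real (card D - 1 choose k) *
        ((\<Sum>j<m. U (\<sigma> (U, i, k, j) \<union> {i}) - U (\<sigma> (U, i, k, j))) / real m))"

definition est_F_agg :: "'a set \<Rightarrow> (nat \<Rightarrow> real) \<Rightarrow> nat
     \<Rightarrow> (('a set \<Rightarrow> real) \<times> 'a \<times> nat \<times> nat \<Rightarrow> 'a set)
     \<Rightarrow> ('a set \<Rightarrow> real) \<Rightarrow> 'a set \<Rightarrow> real" where
  "est_F_agg D w m \<sigma> U P = (\<Sum>i\<in>P. est_semivalue D w m \<sigma> U i)"

definition num_evals :: "'a set \<Rightarrow> ('a set \<Rightarrow> real) set \<Rightarrow> nat \<Rightarrow> nat" where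
  "num_evals D UU m = 2 * card (sample_index D UU m)"

end

theory Submission
  imports Defs
begin

lemma part_sum:
  fixes w :: "nat \<Rightarrow> real"
  assumes "finite A" "card A < n"
  shows "(\<Sum>S\<in>Pow A. w (card S) * g S) = (\<Sum>k<n. w k * (\<Sum>S\<in>{S. S \<subseteq> A \<and> card S = k}. g S))"
proof -
  have "(\<Sum>S\<in>Pow A. w (card S) * g S) = (\<Sum>k<n. (\<Sum>S\<in>{S. S \<in> Pow A \<and> card S = k}. w (card S) * g S))"
  proof (rule sum.group[symmetric])
    show "finite (Pow A)" using assms by simp
    show "card ` Pow A \<subseteq> {..<n}"
    proof
      fix x assume "x \<in> card ` Pow A"
      then obtain S where "S \<subseteq> A" "x = card S" by auto
      then show "x \<in> {..<n}" using assms card_mono[of A S] by simp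
    qed
  qed simp
  also have "\<dots> = (\<Sum>k<n. w k * (\<Sum>S\<in>{S. S \<subseteq> A \<and> card S = k}. g S))"
    by (auto simp: sum_distrib_left intro!: sum.cong)
  finally show ?thesis .
qed

definition margc :: "('a set \<Rightarrow> real) \<Rightarrow> 'a \<Rightarrow> 'a set \<Rightarrow> real" where
  "margc U i S = U (S \<union> {i}) - U S"

definition Zf :: "'a set \<Rightarrow> (nat \<Rightarrow> real) \<Rightarrow> ('a set \<Rightarrow> real) \<Rightarrow> 'a set \<Rightarrow> nat \<Rightarrow> (('a set \<Rightarrow> real) \<times> 'a \<times> nat \<times> nat \<Rightarrow> 'a set) \<Rightarrow> real" where
  "Zf D w U P j \<sigma> = (\<Sum>i\<in>P. \<Sum>k<card D. w k * real (card D - 1 choose k) * margc U i (\<sigma> (U, i, k, j)))"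

lemma est_F_agg_Zf:
  assumes "m > 0"
  shows "est_F_agg D w m \<sigma> U P = (\<Sum>j<m. Zf D w U P j \<sigma>) / real m"
proof -
  have "(\<Sum>j<m. Zf D w U P j \<sigma>) = (\<Sum>j<m. \<Sum>i\<in>P. \<Sum>k<card D. w k * real (card D - 1 choose k) * margc U i (\<sigma> (U, i, k, j)))"
    unfolding Zf_def ..
  also have "\<dots> = (\<Sum>i\<in>P. \<Sum>j<m. \<Sum>k<card D. w k * real (card D - 1 choose k) * margc U i (\<sigma> (U, i, k, j)))"
    by (rule sum.swap)
  also have "\<dots> = (\<Sum>i\<in>P. \<Sum>k<card D. \<Sum>j<m. w k * real (card D - 1 choose k) * margc U i (\<sigma> (U, i, k, j)))"
    by (rule sum.cong[OF refl], rule sum.swap)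
  also have "\<dots> = (\<Sum>i\<in>P. \<Sum>k<card D. w k * real (card D - 1 choose k) * (\<Sum>j<m. margc U i (\<sigma> (U, i, k, j))))"
    by (rule sum.cong[OF refl], rule sum.cong[OF refl], rule sum_distrib_left[symmetric])
  finally have eq: "(\<Sum>j<m. Zf D w U P j \<sigma>) = \<dots>" .
  have "est_F_agg D w m \<sigma> U P = (\<Sum>i\<in>P. \<Sum>k<card D. w k * real (card D - 1 choose k) * (\<Sum>j<m. margc U i (\<sigma> (U, i, k, j)))) / real m"
    unfolding est_F_agg_def est_semivalue_def margc_def
    by (simp only: times_divide_eq_right sum_divide_distrib[symmetric])
  then show ?thesis using eq by simp
qed

lemma strata_ne:
  assumes "finite D" "i \<in> D" "k < card D"
  shows "{S. S \<subseteq> D - {i} \<and> card S = k} \<noteq> {}"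
proof -
  have "card (D - {i}) = card D - 1" using assms by simp
  then have "card {S. S \<subseteq> D - {i} \<and> card S = k} > 0" using assms n_subsets[of "D - {i}" k] by simp
  then show ?thesis by (metis card.empty less_irrefl)
qed

lemma finite_set_strat:
  assumes "finite D" "finite UU"
  shows "finite (set_pmf (strat_sample_pmf D UU m))"
proof -
  have fI: "finite (sample_index D UU m)" using assms by (simp add: sample_index_def)
  show ?thesis unfolding strat_sample_pmf_def
    apply (subst set_Pi_pmf[OF fI])
    apply (rule finite_PiE_dflt[OF fI])
    using assms by (auto simp: split_beta sample_index_def set_pmf_of_set[OF strata_ne])
qed

lemma set_strat:
  assumes "finite D" "finite UU" "\<sigma> \<in> set_pmf (strat_sample_pmf D UU m)"
     "U \<in> UU" "i \<in> D" "k < card D" "j < m"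
  shows "\<sigma> (U, i, k, j) \<subseteq> D - {i} \<and> card (\<sigma> (U, i, k, j)) = k"
proof -
  have fI: "finite (sample_index D UU m)" using assms by (simp add: sample_index_def)
  have ne: "{S. S \<subseteq> D - {i} \<and> card S = k} \<noteq> {}"
  proof -
    have "card (D - {i}) = card D - 1" using assms by simp
    then have "card {S. S \<subseteq> D - {i} \<and> card S = k} > 0" using assms n_subsets[of "D - {i}" k] by simp
    then show ?thesis by (metis card.empty less_irrefl)
  qed
  have fin: "finite {S. S \<subseteq> D - {i} \<and> card S = k}" using assms by simp
  from assms(3) have "\<sigma> (U, i, k, j) \<in> set_pmf (pmf_of_set {S. S \<subseteq> D - {i} \<and> card S = k})"
    unfolding strat_sample_pmf_def set_Pi_pmf[OF fI] PiE_dflt_def using assms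
    by (auto simp: sample_index_def)
  then show ?thesis using set_pmf_of_set[OF ne fin] by auto
qed

lemma exp_margc:
  assumes "finite D" "finite UU" "U \<in> UU" "i \<in> D" "k < card D" "j < m"
  shows "measure_pmf.expectation (strat_sample_pmf D UU m) (\<lambda>\<sigma>. margc U i (\<sigma> (U, i, k, j)))
     = (\<Sum>S\<in>{S. S \<subseteq> D - {i} \<and> card S = k}. margc U i S) / real (card D - 1 choose k)"
proof -
  have fI: "finite (sample_index D UU m)" using assms by (simp add: sample_index_def)
  have x: "(U, i, k, j) \<in> sample_index D UU m" using assms by (simp add: sample_index_def)
  have "measure_pmf.expectation (strat_sample_pmf D UU m) (\<lambda>\<sigma>. margc U i (\<sigma> (U, i, k, j)))
     = measure_pmf.expectation (map_pmf (\<lambda>\<sigma>. \<sigma> (U, i, k, j)) (strat_sample_pmf D UU m)) (margc U i)"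
    by simp
  also have "map_pmf (\<lambda>\<sigma>. \<sigma> (U, i, k, j)) (strat_sample_pmf D UU m) = pmf_of_set {S. S \<subseteq> D - {i} \<and> card S = k}"
    unfolding strat_sample_pmf_def using Pi_pmf_component[OF fI, of "(U, i, k, j)" "{}" "\<lambda>(U, i, k, j). pmf_of_set {S. S \<subseteq> D - {i} \<and> card S = k}"] x by simp
  also have "measure_pmf.expectation (pmf_of_set {S. S \<subseteq> D - {i} \<and> card S = k}) (margc U i)
     = (\<Sum>S\<in>{S. S \<subseteq> D - {i} \<and> card S = k}. margc U i S) / real (card {S. S \<subseteq> D - {i} \<and> card S = k})"
    using strata_ne[OF assms(1,4,5)] assms by (intro integral_pmf_of_set) auto
  also have "card {S. S \<subseteq> D - {i} \<and> card S = k} = card D - 1 choose k"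
    using n_subsets[of "D - {i}" k] assms by simp
  finally show ?thesis .
qed

lemma exp_Zf:
  assumes "finite D" "finite UU" "U \<in> UU" "P \<subseteq> D" "j < m"
  shows "measure_pmf.expectation (strat_sample_pmf D UU m) (Zf D w U P j) = F_agg D w U P"
proof -
  let ?p = "strat_sample_pmf D UU m"
  have int: "integrable (measure_pmf ?p) f" for f :: "_ \<Rightarrow> real"
    by (rule integrable_measure_pmf_finite[OF finite_set_strat[OF assms(1,2)]])
  have "measure_pmf.expectation ?p (Zf D w U P j) =
     (\<Sum>i\<in>P. \<Sum>k<card D. w k * real (card D - 1 choose k) *
        measure_pmf.expectation ?p (\<lambda>\<sigma>. margc U i (\<sigma> (U, i, k, j))))"
    unfolding Zf_def by (simp add: Bochner_Integration.integral_sum[OF int] int)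
  also have "\<dots> = (\<Sum>i\<in>P. \<Sum>k<card D. w k * (\<Sum>S\<in>{S. S \<subseteq> D - {i} \<and> card S = k}. margc U i S))"
  proof (intro sum.cong refl)
    fix i k assume i: "i \<in> P" and k: "k \<in> {..<card D}"
    have pos: "real (card D - 1 choose k) > 0" using k by simp
    show "w k * real (card D - 1 choose k) * measure_pmf.expectation ?p (\<lambda>\<sigma>. margc U i (\<sigma> (U, i, k, j)))
      = w k * (\<Sum>S\<in>{S. S \<subseteq> D - {i} \<and> card S = k}. margc U i S)"
      using exp_margc[OF assms(1,2,3) _ _ assms(5), of i k] i k assms(4) pos by auto
  qed
  also have "\<dots> = F_agg D w U P"
    unfolding F_agg_def semivalue_def
  proof (intro sum.cong refl)
    fix i assume i: "i \<in> P"
    have "card (D - {i}) < card D" using i assms by (meson card_Diff1_less subsetD)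
    then show "(\<Sum>k<card D. w k * (\<Sum>S\<in>{S. S \<subseteq> D - {i} \<and> card S = k}. margc U i S)) =
       (\<Sum>S\<in>Pow (D - {i}). w (card S) * (U (S \<union> {i}) - U S))"
      using part_sum[of "D - {i}" "card D" w "margc U i"] assms by (simp add: margc_def)
  qed
  finally show ?thesis .
qed

lemma bound_Zf:
  assumes "finite D" "finite UU" "U \<in> UU" "P \<subseteq> D" "j < m" "valid_weights D w" "bounded_range D r UU"
    "\<sigma> \<in> set_pmf (strat_sample_pmf D UU m)" "0 \<le> r"
  shows "\<bar>Zf D w U P j \<sigma>\<bar> \<le> real (card D) * r"
proof -
  have w0: "\<And>k. 0 \<le> w k" using assms(6) by (simp add: valid_weights_def)
  have inner: "\<bar>\<Sum>k<card D. w k * real (card D - 1 choose k) * margc U i (\<sigma> (U, i, k, j))\<bar> \<le> r"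
    if i: "i \<in> P" for i
  proof -
    have iD: "i \<in> D" using i assms by auto
    have "\<bar>\<Sum>k<card D. w k * real (card D - 1 choose k) * margc U i (\<sigma> (U, i, k, j))\<bar>
       \<le> (\<Sum>k<card D. \<bar>w k * real (card D - 1 choose k) * margc U i (\<sigma> (U, i, k, j))\<bar>)"
      by (rule sum_abs)
    also have "\<dots> \<le> (\<Sum>k<card D. w k * real (card D - 1 choose k) * r)"
    proof (intro sum_mono)
      fix k assume k: "k \<in> {..<card D}"
      have sub: "\<sigma> (U, i, k, j) \<subseteq> D - {i}" using set_strat[OF assms(1,2,8,3) iD _ assms(5), of k] k by auto
      have s1: "\<sigma> (U, i, k, j) \<subseteq> D" and s2: "\<sigma> (U, i, k, j) \<union> {i} \<subseteq> D" using sub iD by auto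
      have br: "\<And>S T. S \<subseteq> D \<Longrightarrow> T \<subseteq> D \<Longrightarrow> U S - U T \<le> r"
        using assms(7) assms(3) unfolding bounded_range_def by blast
      have "\<bar>margc U i (\<sigma> (U, i, k, j))\<bar> \<le> r"
        unfolding margc_def abs_le_iff using br[OF s1 s2] br[OF s2 s1] by simp
      then show "\<bar>w k * real (card D - 1 choose k) * margc U i (\<sigma> (U, i, k, j))\<bar> \<le> w k * real (card D - 1 choose k) * r"
      proof -
        have nn: "0 \<le> w k * real (card D - 1 choose k)" using w0[of k] by simp
        have "\<bar>w k * real (card D - 1 choose k) * margc U i (\<sigma> (U, i, k, j))\<bar> = w k * real (card D - 1 choose k) * \<bar>margc U i (\<sigma> (U, i, k, j))\<bar>"
          using nn w0[of k] by (simp add: abs_mult)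
        then show ?thesis using mult_left_mono[OF \<open>\<bar>margc U i (\<sigma> (U, i, k, j))\<bar> \<le> r\<close> nn] by simp
      qed
    qed
    also have "\<dots> = (\<Sum>k<card D. w k * real (card D - 1 choose k)) * r"
      by (rule sum_distrib_right[symmetric])
    also have "(\<Sum>k<card D. w k * real (card D - 1 choose k)) = (\<Sum>k<card D. w k * real (card {S. S \<subseteq> D - {i} \<and> card S = k}))"
      using n_subsets[of "D - {i}"] assms iD by simp
    also have "(\<Sum>k<card D. w k * real (card {S. S \<subseteq> D - {i} \<and> card S = k})) = (\<Sum>S\<in>Pow (D - {i}). w (card S))"
    proof -
      have "card (D - {i}) < card D" using iD assms by (meson card_Diff1_less)
      then show ?thesis using part_sum[of "D - {i}" "card D" w "\<lambda>_. 1"] assms by simp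
    qed
    also have "\<dots> = 1" using assms(6) iD by (simp add: valid_weights_def)
    finally show ?thesis by simp
  qed
  have "\<bar>Zf D w U P j \<sigma>\<bar> \<le> (\<Sum>i\<in>P. r)"
    unfolding Zf_def by (rule order_trans[OF sum_abs sum_mono[OF inner]])
  also have "\<dots> = real (card P) * r" by simp
  also have "\<dots> \<le> real (card D) * r"
  proof -
    show ?thesis using card_mono[OF assms(1,4)] assms(9) by (simp add: mult_right_mono)
  qed
  finally show ?thesis .
qed

lemma indep_Zf:
  assumes "finite D" "finite UU" "U \<in> UU" "P \<subseteq> D"
  shows "prob_space.indep_vars (measure_pmf (strat_sample_pmf D UU m)) (\<lambda>_. borel) (\<lambda>j. Zf D w U P j) {..<m}"
proof -
  let ?M = "measure_pmf (strat_sample_pmf D UU m)"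
  let ?I = "sample_index D UU m"
  define K where "K j = {U} \<times> D \<times> {..<card D} \<times> {j}" for j :: nat
  define h where "h j g = (\<Sum>i\<in>P. \<Sum>k<card D. w k * real (card D - 1 choose k) * margc U i (g (U, i, k, j)))"
    for j and g :: "('a set \<Rightarrow> real) \<times> 'a \<times> nat \<times> nat \<Rightarrow> 'a set"
  have fI: "finite ?I" using assms by (simp add: sample_index_def)
  have i0: "prob_space.indep_vars ?M (\<lambda>_. count_space UNIV) (\<lambda>x f. f x) ?I"
    unfolding strat_sample_pmf_def by (rule indep_vars_Pi_pmf[OF fI])
  have i1: "prob_space.indep_vars ?M (\<lambda>j. PiM (K j) (\<lambda>_. count_space UNIV)) (\<lambda>j \<omega>. restrict (\<lambda>x. \<omega> x) (K j)) {..<m}"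
  proof (rule prob_space.indep_vars_restrict[OF measure_pmf.prob_space_axioms i0])
    show "\<And>j. j \<in> {..<m} \<Longrightarrow> K j \<subseteq> ?I" using assms by (auto simp: K_def sample_index_def)
    show "disjoint_family_on K {..<m}" by (auto simp: K_def disjoint_family_on_def)
  qed
  have meas: "h j \<in> measurable (PiM (K j) (\<lambda>_. count_space UNIV)) borel" for j
    unfolding h_def
  proof (intro borel_measurable_sum borel_measurable_times borel_measurable_const)
    fix i k assume "i \<in> P" "k \<in> {..<card D}"
    then have x: "(U, i, k, j) \<in> K j" using assms by (auto simp: K_def)
    show "(\<lambda>g. margc U i (g (U, i, k, j))) \<in> borel_measurable (PiM (K j) (\<lambda>_. count_space UNIV))"
      by (rule measurable_compose[OF measurable_component_singleton[OF x]]) simp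
  qed
  have i2: "prob_space.indep_vars ?M (\<lambda>_. borel) (\<lambda>j \<omega>. h j (restrict (\<lambda>x. \<omega> x) (K j))) {..<m}"
    by (rule prob_space.indep_vars_compose2[OF measure_pmf.prob_space_axioms i1 meas])
  show ?thesis
  proof (rule prob_space.indep_vars_cong[OF measure_pmf.prob_space_axioms, THEN iffD1, OF refl _ refl i2])
    fix j assume "j \<in> {..<m}"
    show "(\<lambda>\<omega>. h j (restrict (\<lambda>x. \<omega> x) (K j))) = Zf D w U P j"
    proof
      fix \<omega>
      show "h j (restrict (\<lambda>x. \<omega> x) (K j)) = Zf D w U P j \<omega>"
        unfolding h_def Zf_def using assms by (intro sum.cong refl) (auto simp: K_def)
    qed
  qed
qed

lemma conc:
  assumes "finite D" "finite UU" "U \<in> UU" "P \<subseteq> D" "valid_weights D w" "bounded_range D r UU"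
    "0 \<le> r" "m > 0" "t \<ge> 0"
  shows "measure_pmf.prob (strat_sample_pmf D UU m)
     {\<sigma>. t \<le> \<bar>est_F_agg D w m \<sigma> U P - F_agg D w U P\<bar>}
     \<le> 2 * exp (- (real m * t\<^sup>2 / (2 * ((r + 1) * (real (card D) + 1))\<^sup>2)))"
proof -
  let ?p = "strat_sample_pmf D UU m"
  define B where "B = (r + 1) * (real (card D) + 1)"
  have Bpos: "B > 0" unfolding B_def using assms by (simp add: add_pos_pos)
  have NrB: "real (card D) * r \<le> B" unfolding B_def using assms
    by (simp add: algebra_simps mult_right_mono)
  interpret H: Hoeffding_ineq "measure_pmf ?p" "{..<m}" "\<lambda>j. Zf D w U P j" "\<lambda>_. - B" "\<lambda>_. B"
    "\<Sum>j<m. measure_pmf.expectation ?p (Zf D w U P j)"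
  proof unfold_locales
    show "finite {..<m}" by simp
    show "prob_space.indep_vars (measure_pmf ?p) (\<lambda>_. borel) (\<lambda>j. Zf D w U P j) {..<m}"
      by (rule indep_Zf[OF assms(1-4)])
    fix j assume j: "j \<in> {..<m}"
    show "AE x in measure_pmf ?p. Zf D w U P j x \<in> {- B..B}"
    proof (rule AE_pmfI)
      fix \<sigma> assume s: "\<sigma> \<in> set_pmf ?p"
      have "j < m" using j by simp
      then have "\<bar>Zf D w U P j \<sigma>\<bar> \<le> B"
        using bound_Zf[OF assms(1-4) _ assms(5,6) s assms(7)] NrB by (meson order_trans)
      then show "Zf D w U P j \<sigma> \<in> {- B..B}" by (simp add: abs_le_iff)
    qed
  qed
  have mu: "(\<Sum>j<m. measure_pmf.expectation ?p (Zf D w U P j)) = real m * F_agg D w U P"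
    using exp_Zf[OF assms(1-4)] by simp
  have "measure_pmf.prob ?p {x \<in> space (measure_pmf ?p). real m * t \<le> \<bar>(\<Sum>j<m. Zf D w U P j x) - (\<Sum>j<m. measure_pmf.expectation ?p (Zf D w U P j))\<bar>}
     \<le> 2 * exp (- 2 * (real m * t)\<^sup>2 / (\<Sum>j<m. (B - - B)\<^sup>2))"
    using assms Bpos by (intro H.Hoeffding_ineq_abs_ge) auto
  also have "- 2 * (real m * t)\<^sup>2 / (\<Sum>j<m. (B - - B)\<^sup>2) = - (real m * t\<^sup>2 / (2 * B\<^sup>2))"
    using assms Bpos by (simp add: power2_eq_square field_simps)
  also have "{x \<in> space (measure_pmf ?p). real m * t \<le> \<bar>(\<Sum>j<m. Zf D w U P j x) - (\<Sum>j<m. measure_pmf.expectation ?p (Zf D w U P j))\<bar>}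
     = {\<sigma>. t \<le> \<bar>est_F_agg D w m \<sigma> U P - F_agg D w U P\<bar>}"
  proof -
    have key: "real m * t \<le> \<bar>S - real m * F\<bar> \<longleftrightarrow> t \<le> \<bar>S / real m - F\<bar>" for S F
    proof -
      have "\<bar>S - real m * F\<bar> = real m * \<bar>S / real m - F\<bar>"
        using assms by (simp add: field_simps abs_mult[symmetric])
      then show ?thesis using assms by simp
    qed
    have eq: "\<And>x. est_F_agg D w m x U P = (\<Sum>j<m. Zf D w U P j x) / real m"
      using est_F_agg_Zf[OF assms(8)] .
    show ?thesis unfolding eq mu key by simp
  qed
  finally show ?thesis unfolding B_def .
qed

lemma expbound:
  fixes \<delta> \<epsilon> r :: real and K N m :: nat
  assumes "0 < \<delta>" "\<delta> < 1" "0 < \<epsilon>" "0 \<le> r" "K \<ge> 1"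
    "real m \<ge> 8 * (r + 1)\<^sup>2 * (1 + ln (2 * real K + 2)) * (real N + 1)\<^sup>2 * (1 + ln (1 / \<delta>)) / \<epsilon>\<^sup>2"
  shows "2 * exp (- (real m * (\<epsilon> / 2)\<^sup>2 / (2 * ((r + 1) * (real N + 1))\<^sup>2))) \<le> \<delta> / (real K + 1)"
proof -
  define L where "L = ln (2 * real K + 2)"
  define l where "l = ln (1 / \<delta>)"
  define Q where "Q = (r + 1)\<^sup>2 * (real N + 1)\<^sup>2"
  have Q0: "Q > 0" unfolding Q_def using assms by (simp add: add_pos_nonneg)
  have L0: "L \<ge> 0" unfolding L_def using assms by simp
  have l0: "l \<ge> 0" unfolding l_def using assms by simp
  have m: "real m \<ge> 8 * Q * (1 + L) * (1 + l) / \<epsilon>\<^sup>2"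
    using assms(6) unfolding Q_def L_def l_def by (simp add: mult_ac)
  have "real m * \<epsilon>\<^sup>2 \<ge> 8 * Q * (1 + L) * (1 + l)"
    using m assms(3) by (simp add: field_simps)
  moreover have e: "real m * (\<epsilon> / 2)\<^sup>2 / (2 * ((r + 1) * (real N + 1))\<^sup>2) = real m * \<epsilon>\<^sup>2 / (8 * Q)"
    unfolding Q_def by (simp add: power_mult_distrib power_divide)
  ultimately have "real m * (\<epsilon> / 2)\<^sup>2 / (2 * ((r + 1) * (real N + 1))\<^sup>2) \<ge> (1 + L) * (1 + l)"
    using Q0 by (simp add: pos_le_divide_eq algebra_simps)
  moreover have "(1 + L) * (1 + l) \<ge> L + l" using L0 l0 by (simp add: algebra_simps)
  ultimately have ge: "real m * (\<epsilon> / 2)\<^sup>2 / (2 * ((r + 1) * (real N + 1))\<^sup>2) \<ge> L + l" by linarith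
  have "2 * exp (- (real m * (\<epsilon> / 2)\<^sup>2 / (2 * ((r + 1) * (real N + 1))\<^sup>2))) \<le> 2 * exp (- (L + l))"
    using ge by simp
  also have "exp (- (L + l)) = \<delta> / (2 * real K + 2)"
    unfolding L_def l_def using assms by (simp add: exp_add exp_minus exp_diff ln_div field_simps)
  finally show ?thesis by (simp add: field_simps)
qed

theorem proposition1:
  fixes K :: nat and r :: real
  assumes "0 \<le> r"
  shows "\<exists>(C::real) (a::nat). C > 0 \<and>
    (\<forall>(D::'a set) w (UU::('a set \<Rightarrow> real) set) P (\<epsilon>::real) (\<delta>::real).
      finite D \<longrightarrow> valid_weights D w \<longrightarrow>
      finite UU \<longrightarrow> UU \<noteq> {} \<longrightarrow> card UU \<le> K \<longrightarrow> bounded_range D r UU \<longrightarrow>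
      P \<subseteq> D \<longrightarrow> 0 < \<epsilon> \<longrightarrow> 0 < \<delta> \<longrightarrow> \<delta> < 1 \<longrightarrow>
      (let m = nat \<lceil>C * real (card D + 1) ^ a * (1 + ln (1 / \<delta>)) / \<epsilon>\<^sup>2\<rceil>
       in real (num_evals D UU m)
            \<le> 2 * real K * real (card D) ^ 2 * (C * real (card D + 1) ^ a * (1 + ln (1 / \<delta>)) / \<epsilon>\<^sup>2 + 1)
          \<and> measure_pmf.prob (strat_sample_pmf D UU m)
              {\<sigma>. \<forall>U\<in>UU. (\<forall>V\<in>UU. est_F_agg D w m \<sigma> V P \<le> est_F_agg D w m \<sigma> U P) \<longrightarrow>
                     \<bar>F_agg D w U P - Max ((\<lambda>V. F_agg D w V P) ` UU)\<bar> < \<epsilon>}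
            \<ge> 1 - \<delta>))"
proof -
  define C where "C = 8 * (r + 1)\<^sup>2 * (1 + ln (2 * real K + 2))"
  have C0: "C > 0" unfolding C_def using assms by (simp add: add_pos_nonneg)
  show ?thesis
  proof (intro exI[of _ C] exI[of _ "2::nat"] conjI allI impI)
    show "C > 0" by (rule C0)
    fix D :: "'a set" and w UU P and \<epsilon> \<delta> :: real
    assume fD: "finite D" and vw: "valid_weights D w" and fU: "finite UU" and ne: "UU \<noteq> {}"
      and cK: "card UU \<le> K" and br: "bounded_range D r UU" and PD: "P \<subseteq> D"
      and e0: "0 < \<epsilon>" and d0: "0 < \<delta>" and d1: "\<delta> < 1"
    define x where "x = C * real (card D + 1) ^ 2 * (1 + ln (1 / \<delta>)) / \<epsilon>\<^sup>2"
    define m where "m = nat \<lceil>x\<rceil>"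
    have l0: "ln (1 / \<delta>) \<ge> 0" using d0 d1 by simp
    have x0: "x > 0" unfolding x_def using C0 e0 l0 by (simp add: add_pos_nonneg)
    have mx: "real m \<ge> x" unfolding m_def by linarith
    have mx1: "real m \<le> x + 1" unfolding m_def using x0 by linarith
    have m0: "m > 0" using mx x0 by linarith
    have K1: "K \<ge> 1" using cK ne fU by (metis card_0_eq le_zero_eq not_less_eq_eq One_nat_def)
    let ?p = "strat_sample_pmf D UU m"
    have ev: "real (num_evals D UU m) \<le> 2 * real K * real (card D) ^ 2 * (x + 1)"
    proof -
      have "num_evals D UU m = 2 * (card UU * (card D * (card D * m)))"
        unfolding num_evals_def sample_index_def by (simp add: card_cartesian_product)
      then have "real (num_evals D UU m) = 2 * real (card UU) * real (card D) ^ 2 * real m"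
        by (simp add: power2_eq_square)
      also have "\<dots> \<le> 2 * real K * real (card D) ^ 2 * (x + 1)"
        using cK mx1 by (intro mult_mono) auto
      finally show ?thesis .
    qed
    define bad where "bad U = {\<sigma>. \<epsilon> / 2 \<le> \<bar>est_F_agg D w m \<sigma> U P - F_agg D w U P\<bar>}" for U
    have pb: "measure_pmf.prob ?p (bad U) \<le> \<delta> / (real K + 1)" if U: "U \<in> UU" for U
    proof -
      have "measure_pmf.prob ?p (bad U) \<le> 2 * exp (- (real m * (\<epsilon> / 2)\<^sup>2 / (2 * ((r + 1) * (real (card D) + 1))\<^sup>2)))"
        unfolding bad_def using e0 by (intro conc[OF fD fU U PD vw br assms m0]) simp
      also have "\<dots> \<le> \<delta> / (real K + 1)"
      proof (rule expbound[OF d0 d1 e0 assms K1])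
        show "real m \<ge> 8 * (r + 1)\<^sup>2 * (1 + ln (2 * real K + 2)) * (real (card D) + 1)\<^sup>2 * (1 + ln (1 / \<delta>)) / \<epsilon>\<^sup>2"
          using mx unfolding x_def C_def by (simp add: add.commute)
      qed
      finally show ?thesis .
    qed
    have pB: "measure_pmf.prob ?p (\<Union>U\<in>UU. bad U) \<le> \<delta>"
    proof -
      have "measure_pmf.prob ?p (\<Union>U\<in>UU. bad U) \<le> (\<Sum>U\<in>UU. measure_pmf.prob ?p (bad U))"
        by (rule measure_pmf.finite_measure_subadditive_finite[OF fU]) auto
      also have "\<dots> \<le> (\<Sum>U\<in>UU. \<delta> / (real K + 1))" by (intro sum_mono pb)
      also have "\<dots> = real (card UU) * \<delta> / (real K + 1)" by simp
      also have "\<dots> \<le> real K * \<delta> / (real K + 1)"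
        using cK d0 by (intro divide_right_mono mult_right_mono) auto
      also have "\<dots> \<le> \<delta>" using d0 by (simp add: field_simps)
      finally show ?thesis .
    qed
    define T where "T = {\<sigma>. \<forall>U\<in>UU. (\<forall>V\<in>UU. est_F_agg D w m \<sigma> V P \<le> est_F_agg D w m \<sigma> U P) \<longrightarrow>
                     \<bar>F_agg D w U P - Max ((\<lambda>V. F_agg D w V P) ` UU)\<bar> < \<epsilon>}"
    have sub: "UNIV - (\<Union>U\<in>UU. bad U) \<subseteq> T"
    proof
      fix \<sigma> assume s: "\<sigma> \<in> UNIV - (\<Union>U\<in>UU. bad U)"
      have good: "est_F_agg D w m \<sigma> V P - F_agg D w V P < \<epsilon> / 2 \<and> F_agg D w V P - est_F_agg D w m \<sigma> V P < \<epsilon> / 2"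
        if V: "V \<in> UU" for V
      proof -
        have "\<sigma> \<notin> bad V" using s V by blast
        then have "\<bar>est_F_agg D w m \<sigma> V P - F_agg D w V P\<bar> < \<epsilon> / 2" unfolding bad_def by simp
        then show ?thesis by linarith
      qed
      have "Max ((\<lambda>V. F_agg D w V P) ` UU) \<in> (\<lambda>V. F_agg D w V P) ` UU"
        using fU ne by (intro Max_in) auto
      then obtain Vs where Vs: "Vs \<in> UU" "Max ((\<lambda>V. F_agg D w V P) ` UU) = F_agg D w Vs P"
        by (rule imageE) blast
      show "\<sigma> \<in> T" unfolding T_def
      proof (intro CollectI ballI impI)
        fix U assume U: "U \<in> UU" and mx: "\<forall>V\<in>UU. est_F_agg D w m \<sigma> V P \<le> est_F_agg D w m \<sigma> U P"
        have le: "F_agg D w U P \<le> Max ((\<lambda>V. F_agg D w V P) ` UU)"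
          by (rule Max_ge[OF finite_imageI[OF fU] imageI[OF U]])
        have e: "est_F_agg D w m \<sigma> Vs P \<le> est_F_agg D w m \<sigma> U P" using mx Vs(1) by blast
        have "F_agg D w Vs P - \<epsilon> < F_agg D w U P"
          using good[OF U] good[OF Vs(1)] e by linarith
        then show "\<bar>F_agg D w U P - Max ((\<lambda>V. F_agg D w V P) ` UU)\<bar> < \<epsilon>"
          using le Vs(2) e0 by linarith
      qed
    qed
    have pT: "measure_pmf.prob ?p T \<ge> 1 - \<delta>"
    proof -
      have "measure_pmf.prob ?p (UNIV - (\<Union>U\<in>UU. bad U)) = 1 - measure_pmf.prob ?p (\<Union>U\<in>UU. bad U)"
        using measure_pmf.prob_compl[of "\<Union>U\<in>UU. bad U" ?p] by simp
      moreover have "measure_pmf.prob ?p (UNIV - (\<Union>U\<in>UU. bad U)) \<le> measure_pmf.prob ?p T"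
        using sub by (intro measure_pmf.finite_measure_mono) auto
      ultimately show ?thesis using pB by linarith
    qed
    show "let m = nat \<lceil>C * real (card D + 1) ^ 2 * (1 + ln (1 / \<delta>)) / \<epsilon>\<^sup>2\<rceil>
       in real (num_evals D UU m)
            \<le> 2 * real K * real (card D) ^ 2 * (C * real (card D + 1) ^ 2 * (1 + ln (1 / \<delta>)) / \<epsilon>\<^sup>2 + 1)
          \<and> measure_pmf.prob (strat_sample_pmf D UU m)
              {\<sigma>. \<forall>U\<in>UU. (\<forall>V\<in>UU. est_F_agg D w m \<sigma> V P \<le> est_F_agg D w m \<sigma> U P) \<longrightarrow>
                     \<bar>F_agg D w U P - Max ((\<lambda>V. F_agg D w V P) ` UU)\<bar> < \<epsilon>}
            \<ge> 1 - \<delta>"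
      unfolding Let_def x_def[symmetric] m_def[symmetric] T_def[symmetric] using ev pT by simp
  qed
qed

end
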